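(* For every integer $n\ge 0$, the number of Retakh Dyck paths of semilength $n$ (equivalently, the number of Retakh plane trees with $n+1$ nodes) equals the Motzkin number $M_n$. Equivalently, if $T(z)=\sum_{\tau}z^{|\tau|}$ is the generating function of Retakh plane trees by number of nodes $|\tau|$, then $T(z)=zM(z)$, where $M(z)=\sum_{n\ge0}M_nz^n=\frac{1-z-\sqrt{1-2z-3z^2}}{2z^2}$ is the unique power series solution of $M=1+zM+z^2M^2$. Moreover, let $F(z)$ be the generating function, by number of nodes, of plane trees with at least two nodes in which every leaf lies at odd depth, and let $G(z)$ be the generating function, by number of nodes, of plane trees in which every leaf lies at even depth (the one-node tree is included, its root being a leaf at depth $0$). Then $F=\frac{zG}{1-G}$, $G=\frac{z}{1-F}$, and $F(z)=z^2M(z)$.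
   Context: A Dyck path of semilength $n$ is a lattice path from $(0,0)$ to $(2n,0)$ with up-steps $(1,1)$ and down-steps $(1,-1)$ that never goes below the $x$-axis. A peak is an up-step immediately followed by a down-step; its level is the height of the point between them. A Retakh Dyck path is a Dyck path all of whose peaks are at level $1$ or at an even level. Under the standard bijection between Dyck paths of semilength $n$ and plane (ordered rooted) trees with $n+1$ nodes, the peaks correspond to the non-root leaves and the level of a peak equals the depth of the leaf (the root has depth $0$). A Retakh plane tree is a plane tree in which every non-root leaf has depth $1$ or even depth; the one-node tree is included, corresponding to the empty path. $M_n$ denotes the $n$-th Motzkin number. *)

theory Defs
  imports "HOL-Computational_Algebra.Formal_Power_Series"
begin

fun motzkin :: "nat \<Rightarrow> nat" where
  "motzkin 0 = 1"
| "motzkin (Suc n) = motzkin n + (\<Sum>k<n. motzkin k * motzkin (n - 1 - k))"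

definition motzkin_fps :: "rat fps" where
  "motzkin_fps = Abs_fps (\<lambda>n. of_nat (motzkin n))"

section \<open>Dyck paths (True = up-step, False = down-step)\<close>

definition height :: "bool list \<Rightarrow> int" where
  "height xs = int (count_list xs True) - int (count_list xs False)"

definition dyck_path :: "bool list \<Rightarrow> bool" where
  "dyck_path xs \<longleftrightarrow> (\<forall>k\<le>length xs. height (take k xs) \<ge> 0) \<and> height xs = 0"

definition is_peak :: "bool list \<Rightarrow> nat \<Rightarrow> bool" where
  "is_peak xs i \<longleftrightarrow> Suc i < length xs \<and> xs ! i \<and> \<not> xs ! Suc i"

definition peak_level :: "bool list \<Rightarrow> nat \<Rightarrow> int" where
  "peak_level xs i = height (take (Suc i) xs)"

definition retakh_path :: "bool list \<Rightarrow> bool" where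
  "retakh_path xs \<longleftrightarrow> dyck_path xs \<and>
     (\<forall>i. is_peak xs i \<longrightarrow> peak_level xs i = 1 \<or> even (peak_level xs i))"

definition retakh_paths :: "nat \<Rightarrow> bool list set" where
  "retakh_paths n = {xs. length xs = 2 * n \<and> retakh_path xs}"

datatype ptree = Node "ptree list"

fun nodes :: "ptree \<Rightarrow> nat" where
  "nodes (Node ts) = Suc (sum_list (map nodes ts))"

fun leaf_depths :: "nat \<Rightarrow> ptree \<Rightarrow> nat set" where
  "leaf_depths d (Node ts) =
     (if ts = [] then {d} else \<Union> (set (map (leaf_depths (Suc d)) ts)))"

text \<open>Retakh plane tree: every non-root leaf has depth 1 or even depth. A leaf at
  depth 0 can only be the root (of the one-node tree), which is excluded.\<close>
definition retakh_tree :: "ptree \<Rightarrow> bool" where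
  "retakh_tree t \<longleftrightarrow> (\<forall>d\<in>leaf_depths 0 t. d \<noteq> 0 \<longrightarrow> d = 1 \<or> even d)"

definition odd_leaf_tree :: "ptree \<Rightarrow> bool" where
  "odd_leaf_tree t \<longleftrightarrow> nodes t \<ge> 2 \<and> (\<forall>d\<in>leaf_depths 0 t. odd d)"

definition even_leaf_tree :: "ptree \<Rightarrow> bool" where
  "even_leaf_tree t \<longleftrightarrow> (\<forall>d\<in>leaf_depths 0 t. even d)"

definition tree_gf :: "(ptree \<Rightarrow> bool) \<Rightarrow> rat fps" where
  "tree_gf P = Abs_fps (\<lambda>n. of_nat (card {t. nodes t = n \<and> P t}))"

end

theory Submission
  imports Defs
begin


lemma nodes_pos: "nodes t \<ge> 1"
  by (cases t) auto

lemma nodes_ne0[simp]: "nodes t \<noteq> 0"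
  by (cases t) auto

lemma sum_nodes_ge_length: "sum_list (map nodes ts) \<ge> length ts"
proof (induction ts)
  case (Cons a ts) then show ?case using nodes_pos[of a] by simp
qed simp

lemma finite_nodes_le: "finite {t. nodes t \<le> n}"
proof (induction n)
  case 0
  have "{t. nodes t \<le> 0} = {}" using nodes_pos by (auto simp: not_less_eq_eq)
  then show ?case by simp
next
  case (Suc n)
  have "{t. nodes t \<le> Suc n} \<subseteq> Node ` {ts. set ts \<subseteq> {t. nodes t \<le> n} \<and> length ts \<le> n}"
  proof
    fix t assume "t \<in> {t. nodes t \<le> Suc n}"
    then obtain ts where t: "t = Node ts" "sum_list (map nodes ts) \<le> n" by (cases t) auto
    have "set ts \<subseteq> {t. nodes t \<le> n}"
      using t(2) member_le_sum_list[of _ "map nodes ts"] by force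
    moreover have "length ts \<le> n" using t(2) sum_nodes_ge_length[of ts] by simp
    ultimately show "t \<in> Node ` {ts. set ts \<subseteq> {t. nodes t \<le> n} \<and> length ts \<le> n}" using t by auto
  qed
  then show ?case using finite_lists_length_le[OF Suc.IH] finite_subset by blast
qed

lemma finite_nodes_eq: "finite {t. nodes t = n \<and> P t}"
  by (rule finite_subset[OF _ finite_nodes_le[of n]]) auto


definition Aset :: "(ptree \<Rightarrow> bool) \<Rightarrow> nat \<Rightarrow> ptree set" where
  "Aset P k = {t. nodes t = k \<and> P t}"

definition Lset :: "(ptree \<Rightarrow> bool) \<Rightarrow> nat \<Rightarrow> ptree list set" where
  "Lset P n = {ts. sum_list (map nodes ts) = n \<and> list_all P ts}"

lemma finite_Aset: "finite (Aset P k)"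
  unfolding Aset_def by (rule finite_nodes_eq)

lemma Aset_0: "Aset P 0 = {}"
  using nodes_pos unfolding Aset_def by (auto simp: not_less_eq_eq)

lemma finite_Lset: "finite (Lset P n)"
proof (rule finite_subset[OF _ finite_lists_length_le[OF finite_nodes_le[of n], of n]])
  show "Lset P n \<subseteq> {xs. set xs \<subseteq> {t. nodes t \<le> n} \<and> length xs \<le> n}"
    unfolding Lset_def using member_le_sum_list[of _ "map nodes _"] sum_nodes_ge_length by force
qed

lemma Lset_0: "Lset P 0 = {[]}"
proof -
  have "sum_list (map nodes ts) = 0 \<Longrightarrow> ts = []" for ts using nodes_pos by (cases ts) auto
  then show ?thesis unfolding Lset_def by auto
qed

lemma Lset_Suc: "Lset P (Suc n) = (\<lambda>(t,ts). t#ts) ` (\<Union>k\<in>{0..Suc n}. Aset P k \<times> Lset P (Suc n - k))"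
proof
  show "Lset P (Suc n) \<subseteq> (\<lambda>(t,ts). t#ts) ` (\<Union>k\<in>{0..Suc n}. Aset P k \<times> Lset P (Suc n - k))"
  proof
    fix xs assume xs: "xs \<in> Lset P (Suc n)"
    then obtain t ts where "xs = t # ts" unfolding Lset_def by (cases xs) auto
    with xs show "xs \<in> (\<lambda>(t,ts). t#ts) ` (\<Union>k\<in>{0..Suc n}. Aset P k \<times> Lset P (Suc n - k))"
      unfolding Lset_def Aset_def by (auto intro!: image_eqI[where x="(t,ts)"] bexI[where x="nodes t"])
  qed
  show "(\<lambda>(t,ts). t#ts) ` (\<Union>k\<in>{0..Suc n}. Aset P k \<times> Lset P (Suc n - k)) \<subseteq> Lset P (Suc n)"
    unfolding Lset_def Aset_def by auto
qed

lemma card_Lset_Suc: "card (Lset P (Suc n)) = (\<Sum>k=0..Suc n. card (Aset P k) * card (Lset P (Suc n - k)))"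
proof -
  have inj: "inj_on (\<lambda>(t,ts). t#ts) X" for X :: "(ptree \<times> ptree list) set"
    by (auto simp: inj_on_def)
  have "card (Lset P (Suc n)) = card (\<Union>k\<in>{0..Suc n}. Aset P k \<times> Lset P (Suc n - k))"
    unfolding Lset_Suc by (rule card_image[OF inj])
  also have "\<dots> = (\<Sum>k=0..Suc n. card (Aset P k \<times> Lset P (Suc n - k)))"
    by (rule card_UN_disjoint) (auto simp: finite_Aset finite_Lset finite_nodes_eq Aset_def)
  also have "\<dots> = (\<Sum>k=0..Suc n. card (Aset P k) * card (Lset P (Suc n - k)))"
    by (simp add: card_cartesian_product)
  finally show ?thesis .
qed

definition SP :: "(ptree \<Rightarrow> bool) \<Rightarrow> rat fps" where
  "SP P = Abs_fps (\<lambda>n. of_nat (card (Lset P n)))"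

lemma tree_gf_Aset: "tree_gf P = Abs_fps (\<lambda>n. of_nat (card (Aset P n)))"
  unfolding tree_gf_def Aset_def ..

lemma SP_eq: "SP P = 1 + tree_gf P * SP P"
proof (rule fps_ext)
  fix n show "fps_nth (SP P) n = fps_nth (1 + tree_gf P * SP P) n"
  proof (cases n)
    case 0 then show ?thesis by (simp add: SP_def tree_gf_Aset Lset_0 Aset_0)
  next
    case (Suc m)
    then show ?thesis
      by (simp add: SP_def tree_gf_Aset fps_mult_nth card_Lset_Suc)
  qed
qed

lemma SP_inv: "SP P * (1 - tree_gf P) = 1"
proof -
  have "SP P * (1 - tree_gf P) = SP P - tree_gf P * SP P" by (simp add: algebra_simps)
  also have "\<dots> = 1" by (metis SP_eq add_diff_cancel_right')
  finally show ?thesis .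
qed

lemma gf_node_all:
  assumes "\<And>ts. Q (Node ts) \<longleftrightarrow> list_all P ts"
  shows "tree_gf Q = fps_X * SP P"
proof (rule fps_ext)
  fix n
  show "fps_nth (tree_gf Q) n = fps_nth (fps_X * SP P) n"
  proof (cases n)
    case 0 then show ?thesis by (simp add: tree_gf_Aset Aset_0)
  next
    case (Suc m)
    have "Aset Q (Suc m) = Node ` Lset P m"
    proof
      show "Aset Q (Suc m) \<subseteq> Node ` Lset P m"
      proof
        fix t assume "t \<in> Aset Q (Suc m)"
        then show "t \<in> Node ` Lset P m" unfolding Aset_def Lset_def using assms by (cases t) auto
      qed
    qed (auto simp: Aset_def Lset_def assms)
    then have "card (Aset Q (Suc m)) = card (Lset P m)"
      by (simp add: card_image inj_on_def)
    then show ?thesis using Suc by (simp add: tree_gf_Aset SP_def)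
  qed
qed

lemma gf_node_ne:
  assumes "\<And>ts. Q (Node ts) \<longleftrightarrow> ts \<noteq> [] \<and> list_all P ts"
  shows "tree_gf Q = fps_X * (SP P - 1)"
proof (rule fps_ext)
  fix n
  show "fps_nth (tree_gf Q) n = fps_nth (fps_X * (SP P - 1)) n"
  proof (cases n)
    case 0 then show ?thesis by (simp add: tree_gf_Aset Aset_0)
  next
    case (Suc m)
    have "Aset Q (Suc m) = Node ` (Lset P m - {[]})"
    proof
      show "Aset Q (Suc m) \<subseteq> Node ` (Lset P m - {[]})"
      proof
        fix t assume "t \<in> Aset Q (Suc m)"
        then show "t \<in> Node ` (Lset P m - {[]})" unfolding Aset_def Lset_def using assms by (cases t) auto
      qed
    qed (auto simp: Aset_def Lset_def assms)
    then have "card (Aset Q (Suc m)) = card (Lset P m - {[]})"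
      by (simp add: card_image inj_on_def)
    moreover have "card (Lset P m - {[]}) = card (Lset P m) - (if m = 0 then 1 else 0)"
      using Lset_0[of P] by (cases m) (auto simp: Lset_def)
    moreover have "card (Lset P 0) = 1" by (simp add: Lset_0)
    ultimately show ?thesis using Suc by (cases m) (auto simp: tree_gf_Aset SP_def)
  qed
qed



lemma ld_shift: "leaf_depths (Suc d) t = Suc ` leaf_depths d t"
proof (induction t arbitrary: d)
  case (Node ts)
  show ?case
  proof (cases "ts = []")
    case True then show ?thesis by simp
  next
    case False
    have "leaf_depths (Suc d) (Node ts) = (\<Union>t\<in>set ts. leaf_depths (Suc (Suc d)) t)" using False by simp
    also have "\<dots> = (\<Union>t\<in>set ts. Suc ` leaf_depths (Suc d) t)"
      by (rule SUP_cong) (simp_all add: Node.IH)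
    also have "\<dots> = Suc ` (\<Union>t\<in>set ts. leaf_depths (Suc d) t)" by (simp add: image_UN)
    also have "\<dots> = Suc ` leaf_depths d (Node ts)" using False by simp
    finally show ?thesis .
  qed
qed

lemma ld_Node: "ts \<noteq> [] \<Longrightarrow> leaf_depths 0 (Node ts) = (\<Union>t\<in>set ts. Suc ` leaf_depths 0 t)"
  using ld_shift[of 0] by simp

lemma ld_leaf: "leaf_depths d (Node []) = {d}" by simp

lemma nodes_one: "nodes t = 1 \<longleftrightarrow> t = Node []"
proof (cases t)
  case (Node ts) then show ?thesis by (cases ts) auto
qed

lemma odd_leaf_iff: "odd_leaf_tree t \<longleftrightarrow> (\<forall>d\<in>leaf_depths 0 t. odd d)"
proof
  assume a: "\<forall>d\<in>leaf_depths 0 t. odd d"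
  have "nodes t \<ge> 2"
  proof (rule ccontr)
    assume "\<not> nodes t \<ge> 2"
    then have "nodes t = 1" using nodes_pos[of t] by linarith
    then have "t = Node []" using nodes_one by blast
    then show False using a by simp
  qed
  then show "odd_leaf_tree t" using a unfolding odd_leaf_tree_def by blast
qed (simp add: odd_leaf_tree_def)

lemma even_char: "even_leaf_tree (Node ts) \<longleftrightarrow> list_all odd_leaf_tree ts"
proof (cases "ts = []")
  case True then show ?thesis by (simp add: even_leaf_tree_def)
next
  case False then show ?thesis
    by (auto simp: even_leaf_tree_def ld_shift odd_leaf_iff list_all_iff)
qed

lemma odd_char: "odd_leaf_tree (Node ts) \<longleftrightarrow> ts \<noteq> [] \<and> list_all even_leaf_tree ts"
proof (cases "ts = []")
  case True then show ?thesis by (simp add: odd_leaf_iff)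
next
  case False then show ?thesis
    by (auto simp: even_leaf_tree_def ld_shift odd_leaf_iff list_all_iff)
qed

lemma child_aux: "(\<forall>d\<in>leaf_depths 0 t. d = 0 \<or> odd d) \<longleftrightarrow> t = Node [] \<or> odd_leaf_tree t"
proof (cases t)
  case (Node us)
  show ?thesis
  proof (cases "us = []")
    case True then show ?thesis using Node by simp
  next
    case False
    then have "0 \<notin> leaf_depths 0 t" using Node ld_Node by auto
    then show ?thesis using Node False odd_leaf_iff by (auto simp: ld_shift)
  qed
qed

lemma retakh_char: "retakh_tree (Node ts) \<longleftrightarrow> list_all (\<lambda>t. t = Node [] \<or> odd_leaf_tree t) ts"
proof (cases "ts = []")
  case True then show ?thesis by (simp add: retakh_tree_def)
next
  case False
  have "retakh_tree (Node ts) \<longleftrightarrow> (\<forall>t\<in>set ts. \<forall>d\<in>leaf_depths 0 t. d = 0 \<or> odd d)"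
    using False by (auto simp: retakh_tree_def ld_shift)
  then show ?thesis using child_aux by (simp add: list_all_iff)
qed

lemma tree_gf_0: "fps_nth (tree_gf P) 0 = 0"
  by (simp add: tree_gf_Aset Aset_0)

lemma gf_child: "tree_gf (\<lambda>t. t = Node [] \<or> odd_leaf_tree t) = fps_X + tree_gf odd_leaf_tree"
proof (rule fps_ext)
  fix n
  have "{t. nodes t = n \<and> (t = Node [] \<or> odd_leaf_tree t)}
        = {t. nodes t = n \<and> t = Node []} \<union> {t. nodes t = n \<and> odd_leaf_tree t}" by blast
  moreover have "{t. nodes t = n \<and> t = Node []} \<inter> {t. nodes t = n \<and> odd_leaf_tree t} = {}"
    using odd_char[of "[]"] by auto
  moreover have "{t. nodes t = n \<and> t = Node []} = (if n = 1 then {Node []} else {})" by auto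
  ultimately have "card {t. nodes t = n \<and> (t = Node [] \<or> odd_leaf_tree t)}
      = (if n = 1 then 1 else 0) + card {t. nodes t = n \<and> odd_leaf_tree t}"
    using card_Un_disjoint[OF finite_nodes_eq finite_nodes_eq] odd_char[of "[]"] by (simp add: card_insert_if finite_nodes_eq split: if_splits)
  then show "fps_nth (tree_gf (\<lambda>t. t = Node [] \<or> odd_leaf_tree t)) n
     = fps_nth (fps_X + tree_gf odd_leaf_tree) n"
    by (simp add: tree_gf_def fps_X_nth)
qed

lemma M_eq: "motzkin_fps = 1 + fps_X * motzkin_fps + fps_X^2 * motzkin_fps^2"
proof (rule fps_ext)
  fix n
  show "fps_nth motzkin_fps n = fps_nth (1 + fps_X * motzkin_fps + fps_X^2 * motzkin_fps^2) n"
  proof (cases n)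
    case 0 then show ?thesis by (simp add: motzkin_fps_def fps_X_power_mult_nth)
  next
    case (Suc m)
    show ?thesis
    proof (cases m)
      case 0 then show ?thesis using Suc by (simp add: motzkin_fps_def fps_X_power_mult_nth)
    next
      case (Suc k)
      have sq: "fps_nth (motzkin_fps^2) k = (\<Sum>i=0..k. of_nat (motzkin i) * of_nat (motzkin (k-i)))"
        by (simp add: power2_eq_square fps_mult_nth motzkin_fps_def)
      have "(\<Sum>i<Suc k. motzkin i * motzkin (Suc k - 1 - i)) = (\<Sum>i=0..k. motzkin i * motzkin (k-i))"
        by (simp add: lessThan_Suc_atMost atLeast0AtMost)
      then have "of_nat (motzkin (Suc (Suc k))) = (of_nat (motzkin (Suc k)) :: rat) + (\<Sum>i=0..k. of_nat (motzkin i) * of_nat (motzkin (k-i)))"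
        by (simp only: motzkin.simps of_nat_add of_nat_sum of_nat_mult)
      then show ?thesis using \<open>n = Suc m\<close> Suc sq
        by (simp add: motzkin_fps_def fps_X_power_mult_nth)
    qed
  qed
qed

lemma ring1:
  fixes Q E X :: "'a::comm_ring_1"
  assumes "E*(1-Q) = X" "Q*(1-E) = X*E"
  shows "Q*(1-Q) - X*Q = X^2"
proof -
  have a: "X^2 = Q*(1-E)*(1-Q)"
  proof -
    have "X^2 = X*(E*(1-Q))" using assms(1) by (simp add: power2_eq_square)
    also have "\<dots> = (X*E)*(1-Q)" by (simp add: mult.assoc)
    also have "\<dots> = Q*(1-E)*(1-Q)" using assms(2) by simp
    finally show ?thesis .
  qed
  have b: "X*Q = E*(1-Q)*Q" using assms(1) by simp
  show ?thesis unfolding a b by (simp add: algebra_simps)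
qed

lemma ring2:
  fixes M X :: "'a::comm_ring_1"
  assumes "M = 1 + X*M + X^2*M^2"
  shows "(X^2*M)*(1-X^2*M) - X*(X^2*M) = X^2"
proof -
  have "(X^2*M)*(1-X^2*M) - X*(X^2*M) = X^2 * (M - X*M - X^2*M^2)"
    by (simp add: algebra_simps power2_eq_square)
  also have "M - X*M - X^2*M^2 = 1" using assms by (simp add: algebra_simps)
  finally show ?thesis by simp
qed

lemma ring3:
  fixes Q Y X :: "'a::comm_ring_1"
  assumes "Q*(1-Q) - X*Q = X^2" "Y*(1-Y) - X*Y = X^2"
  shows "(Q - Y) * (1 - Q - Y - X) = 0"
proof -
  have "(Q - Y) * (1 - Q - Y - X) = (Q*(1-Q) - X*Q) - (Y*(1-Y) - X*Y)"
    by (simp add: algebra_simps)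
  then show ?thesis using assms by simp
qed

lemma ring4:
  fixes M X :: "'a::comm_ring_1"
  assumes "M = 1 + X*M + X^2*M^2"
  shows "M * (1 - (X + X^2*M)) = 1"
proof -
  have "M * (1 - (X + X^2*M)) = M - X*M - X^2*M^2" by (simp add: algebra_simps power2_eq_square)
  also have "\<dots> = 1" using assms by (simp add: algebra_simps)
  finally show ?thesis .
qed

lemma fps_main:
  shows "tree_gf retakh_tree = fps_X * motzkin_fps
       \<and> tree_gf odd_leaf_tree = fps_X * tree_gf even_leaf_tree / (1 - tree_gf even_leaf_tree)
       \<and> tree_gf even_leaf_tree = fps_X / (1 - tree_gf odd_leaf_tree)
       \<and> tree_gf odd_leaf_tree = fps_X ^ 2 * motzkin_fps"
proof -
  define E where "E = tree_gf even_leaf_tree"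
  define Q where "Q = tree_gf odd_leaf_tree"
  define M where "M = motzkin_fps"
  define X where "X = (fps_X :: rat fps)"
  define C where "C = (\<lambda>t. t = Node [] \<or> odd_leaf_tree t)"
  have hE: "E = X * SP odd_leaf_tree" unfolding E_def X_def by (rule gf_node_all) (rule even_char)
  have hO: "Q = X * (SP even_leaf_tree - 1)" unfolding Q_def X_def by (rule gf_node_ne) (rule odd_char)
  have hR: "tree_gf retakh_tree = X * SP C" unfolding C_def X_def by (rule gf_node_all) (rule retakh_char)
  have s1: "SP odd_leaf_tree * (1 - Q) = 1" unfolding Q_def by (rule SP_inv)
  have s2: "SP even_leaf_tree * (1 - E) = 1" unfolding E_def by (rule SP_inv)
  have s3: "SP C * (1 - (X + Q)) = 1" using SP_inv[of C] gf_child unfolding C_def Q_def X_def by simp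
  have e1: "E * (1 - Q) = X" using hE s1 by (simp add: mult.assoc)
  have e2: "SP even_leaf_tree - 1 = E * SP even_leaf_tree" by (metis SP_eq add_diff_cancel_left' E_def)
  have e3: "Q * (1 - E) = X * E"
  proof -
    have "Q * (1 - E) = X * (E * (SP even_leaf_tree * (1 - E)))" using hO e2 by (simp add: mult.assoc mult.commute mult.left_commute)
    then show ?thesis using s2 by simp
  qed
  have O0: "fps_nth Q 0 = 0" "fps_nth E 0 = 0" unfolding Q_def E_def by (simp_all add: tree_gf_0)
  have invO: "inverse (1 - Q) = SP odd_leaf_tree" by (rule fps_inverse_unique) (use s1 in \<open>simp add: mult.commute\<close>)
  have invE: "inverse (1 - E) = SP even_leaf_tree" by (rule fps_inverse_unique) (use s2 in \<open>simp add: mult.commute\<close>)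
  have g6: "E = X / (1 - Q)" using hE invO O0 by (simp add: fps_divide_unit)
  have g5: "Q = X * E / (1 - E)"
  proof -
    have "X * E / (1 - E) = X * E * SP even_leaf_tree" using invE O0 by (simp add: fps_divide_unit)
    also have "\<dots> = Q" using hO e2 by (simp add: mult.assoc)
    finally show ?thesis by simp
  qed
  have Meq: "M = 1 + X*M + X^2*M^2" unfolding M_def X_def by (rule M_eq)
  have q1: "Q*(1-Q) - X*Q = X^2" by (rule ring1[OF e1 e3])
  have q2: "(X^2*M)*(1-X^2*M) - X*(X^2*M) = X^2" by (rule ring2[OF Meq])
  have q3: "(Q - X^2*M) * (1 - Q - X^2*M - X) = 0" by (rule ring3[OF q1 q2])
  have nz: "1 - Q - X^2*M - X \<noteq> 0"
  proof
    assume "1 - Q - X^2*M - X = 0"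
    then have "fps_nth (1 - Q - X^2*M - X) 0 = 0" by simp
    then show False using O0 by (simp add: X_def fps_X_power_mult_nth)
  qed
  have g7: "Q = X^2*M" using q3 nz by simp
  have m1: "M * (1 - (X + X^2*M)) = 1" by (rule ring4[OF Meq])
  have "SP C = M"
  proof -
    have "inverse (1 - (X + Q)) = SP C" by (rule fps_inverse_unique) (use s3 in \<open>simp add: mult.commute\<close>)
    moreover have "inverse (1 - (X + Q)) = M" by (rule fps_inverse_unique) (use m1 g7 in \<open>simp add: mult.commute\<close>)
    ultimately show ?thesis by simp
  qed
  then have g4: "tree_gf retakh_tree = X * M" using hR by simp
  show ?thesis using g4 g5 g6 g7 unfolding E_def Q_def M_def X_def by blast
qed



fun enc :: "ptree \<Rightarrow> bool list" where
  "enc (Node ts) = concat (map (\<lambda>t. True # enc t @ [False]) ts)"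

lemma enc_Nil[simp]: "enc (Node []) = []" by simp
lemma enc_Cons: "enc (Node (t#ts)) = True # enc t @ False # enc (Node ts)" by simp

declare enc.simps[simp del]

lemma height_Nil[simp]: "height [] = 0" by (simp add: height_def)
lemma height_Cons[simp]: "height (x # xs) = (if x then 1 else -1) + height xs"
  by (simp add: height_def)
lemma height_append[simp]: "height (xs @ ys) = height xs + height ys"
  by (simp add: height_def)

lemma length_enc: "length (enc t) + 2 = 2 * nodes t"
proof (induction t)
  case (Node ts)
  then show ?case
  proof (induction ts)
    case Nil then show ?case by simp
  next
    case (Cons a ts)
    have "length (enc a) + 2 = 2 * nodes a" using Cons.prems by simp
    moreover have "length (enc (Node ts)) + 2 = 2 * nodes (Node ts)" using Cons.IH Cons.prems by simp
    ultimately show ?case by (simp add: enc_Cons)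
  qed
qed

lemma dyck_take: "dyck_path B \<Longrightarrow> height (take k B) \<ge> 0"
  unfolding dyck_path_def by (cases "k \<le> length B") auto

lemma dyck_Cons: "dyck_path A \<Longrightarrow> dyck_path B \<Longrightarrow> dyck_path (True # A @ False # B)"
proof -
  assume A: "dyck_path A" and B: "dyck_path B"
  have "height (take k (True # A @ False # B)) \<ge> 0" for k
  proof (cases k)
    case 0 then show ?thesis by simp
  next
    case (Suc j)
    show ?thesis
    proof (cases "j \<le> length A")
      case True
      then have "take k (True # A @ False # B) = True # take j A" using Suc by simp
      then show ?thesis using dyck_take[OF A, of j] by simp
    next
      case False
      then obtain i where i: "j = length A + Suc i" by (metis add_Suc_right le_add1 less_imp_Suc_add not_le)
      then have "take k (True # A @ False # B) = True # A @ False # take i B" using Suc by simp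
      then show ?thesis using dyck_take[OF B, of i] A by (simp add: dyck_path_def)
    qed
  qed
  then show ?thesis using A B by (simp add: dyck_path_def)
qed

lemma dyck_enc: "dyck_path (enc t)"
proof (induction t)
  case (Node ts)
  then show ?case
  proof (induction ts)
    case Nil then show ?case by (simp add: dyck_path_def)
  next
    case (Cons a ts)
    then show ?case by (simp add: enc_Cons dyck_Cons)
  qed
qed

lemma first_ret_le:
  assumes "dyck_path a" "dyck_path a'" "a @ False # b = a' @ False # b'"
  shows "length a' \<le> length a"
proof (rule ccontr)
  assume "\<not> length a' \<le> length a"
  then have l: "Suc (length a) \<le> length a'" by simp
  have "take (Suc (length a)) (a @ False # b) = a @ [False]" by simp
  moreover have "take (Suc (length a)) (a' @ False # b') = take (Suc (length a)) a'" using l by simp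
  ultimately have "take (Suc (length a)) a' = a @ [False]" using assms(3) by simp
  then have "height (take (Suc (length a)) a') = -1" using assms(1) by (simp add: dyck_path_def)
  moreover have "height (take (Suc (length a)) a') \<ge> 0" using dyck_take[OF assms(2)] by blast
  ultimately show False by simp
qed

lemma first_ret:
  assumes "dyck_path a" "dyck_path a'" "a @ False # b = a' @ False # b'"
  shows "a = a' \<and> b = b'"
proof -
  have "length a = length a'" using first_ret_le[OF assms] first_ret_le[OF assms(2,1) assms(3)[symmetric]] by simp
  then show ?thesis using assms(3) by simp
qed

lemma enc_inj: "enc s = enc t \<Longrightarrow> s = t"
proof (induction s arbitrary: t)
  case (Node ts)
  from Node.IH Node.prems show ?case
  proof (induction ts arbitrary: t)
    case Nil
    obtain us where t: "t = Node us" by (cases t)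
    then show ?case using Nil by (cases us) (auto simp: enc_Cons)
  next
    case (Cons a ts t)
    obtain us where t: "t = Node us" by (cases t)
    with Cons.prems(2) obtain b us' where us: "us = b # us'" by (cases us) (auto simp: enc_Cons)
    from Cons.prems(2) t us have "enc a @ False # enc (Node ts) = enc b @ False # enc (Node us')"
      by (simp add: enc_Cons)
    with first_ret[OF dyck_enc dyck_enc] have e: "enc a = enc b" "enc (Node ts) = enc (Node us')" by blast+
    then have "a = b" using Cons.prems(1) by simp
    have "Node ts = Node us'" using Cons.IH Cons.prems(1) e(2) by simp
    then show ?case using t us \<open>a = b\<close> by simp
  qed
qed

lemma split_neg:
  "height ys \<le> -1 \<Longrightarrow> \<exists>a b. ys = a @ False # b \<and> dyck_path a"
proof (induction "length ys" arbitrary: ys rule: less_induct)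
  case less
  show ?case
  proof (cases ys)
    case Nil then show ?thesis using less.prems by simp
  next
    case (Cons x ys')
    show ?thesis
    proof (cases x)
      case False
      then show ?thesis using Cons by (intro exI[of _ "[]"] exI[of _ ys']) (simp add: dyck_path_def)
    next
      case True
      then have "height ys' \<le> -1" using less.prems Cons by simp
      moreover have "length ys' < length ys" using Cons by simp
      ultimately obtain a1 b1 where 1: "ys' = a1 @ False # b1" "dyck_path a1" using less.hyps by blast
      then have "height b1 \<le> -1" using less.prems Cons True by (simp add: dyck_path_def)
      moreover have "length b1 < length ys" using 1 Cons by simp
      ultimately obtain a2 b2 where 2: "b1 = a2 @ False # b2" "dyck_path a2" using less.hyps by blast
      have "ys = (True # a1 @ False # a2) @ False # b2" using Cons True 1 2 by simp
      moreover have "dyck_path (True # a1 @ False # a2)" using dyck_Cons 1 2 by blast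
      ultimately show ?thesis by blast
    qed
  qed
qed

lemma dyck_surj: "dyck_path xs \<Longrightarrow> \<exists>t. enc t = xs"
proof (induction "length xs" arbitrary: xs rule: less_induct)
  case less
  show ?case
  proof (cases xs)
    case Nil then show ?thesis by (intro exI[of _ "Node []"]) simp
  next
    case (Cons x xs')
    have pre: "\<forall>k\<le>length xs. 0 \<le> height (take k xs)" using less.prems unfolding dyck_path_def by blast
    have "1 \<le> length xs" using Cons by simp
    with pre have "0 \<le> height (take 1 xs)" by blast
    moreover have "take 1 xs = [x]" using Cons by simp
    ultimately have "0 \<le> height [x]" by simp
    then have x: "x" by (cases x) simp_all
    then have "height xs' \<le> -1" using less.prems Cons by (simp add: dyck_path_def)
    then obtain a b where ab: "xs' = a @ False # b" "dyck_path a" using split_neg by blast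
    have "dyck_path b"
    proof -
      have "height (take k b) \<ge> 0" if "k \<le> length b" for k
      proof -
        have "length a + 2 + k \<le> length xs" using that Cons ab by simp
        have "take (length a + 2 + k) xs = True # a @ False # take k b" using Cons x ab by simp
        moreover have "height a = 0" using ab(2) by (simp add: dyck_path_def)
        ultimately have "height (take (length a + 2 + k) xs) = height (take k b)" by simp
        then show ?thesis using pre \<open>length a + 2 + k \<le> length xs\<close> by metis
      qed
      moreover have "height b = 0" using less.prems Cons x ab by (simp add: dyck_path_def)
      ultimately show ?thesis by (simp add: dyck_path_def)
    qed
    obtain s where s: "enc s = a" using less.hyps ab Cons by fastforce
    obtain u where u: "enc u = b" using less.hyps \<open>dyck_path b\<close> ab Cons by fastforce
    obtain us where us: "u = Node us" by (cases u)
    have "enc (Node (s # us)) = xs" using s u us Cons x ab by (simp add: enc_Cons)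
    then show ?thesis by blast
  qed
qed



fun pk :: "int \<Rightarrow> bool list \<Rightarrow> int set" where
  "pk h [] = {}"
| "pk h [x] = {}"
| "pk h (True # False # xs) = insert (h+1) (pk (h+1) (False # xs))"
| "pk h (True # True # xs) = pk (h+1) (True # xs)"
| "pk h (False # y # xs) = pk (h-1) (y # xs)"

lemma is_peak_Suc[simp]: "is_peak (x#xs) (Suc i) = is_peak xs i"
  by (simp add: is_peak_def)
lemma peak_level_Suc[simp]: "peak_level (x#xs) (Suc i) = (if x then 1 else -1) + peak_level xs i"
  by (simp add: peak_level_def)
lemma is_peak_0[simp]: "is_peak (x#y#xs) 0 \<longleftrightarrow> x \<and> \<not> y"
  by (simp add: is_peak_def)
lemma peak_level_0[simp]: "peak_level (x#xs) 0 = (if x then 1 else -1)"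
  by (simp add: peak_level_def)
lemma is_peak_short[simp]: "\<not> is_peak [] i" "\<not> is_peak [x] i"
  by (simp_all add: is_peak_def)

lemma set_split0: "{f i |i. P i} = (if P 0 then {f 0} else {}) \<union> {f (Suc i) |i. P (Suc i)}"
proof (rule set_eqI, rule iffI)
  fix y assume "y \<in> {f i |i. P i}"
  then obtain i where "y = f i" "P i" by blast
  then show "y \<in> (if P 0 then {f 0} else {}) \<union> {f (Suc i) |i. P (Suc i)}" by (cases i) auto
next
  fix y assume "y \<in> (if P 0 then {f 0} else {}) \<union> {f (Suc i) |i. P (Suc i)}"
  then show "y \<in> {f i |i. P i}" by (auto split: if_splits)
qed

lemma pk_peaks: "pk h xs = {h + peak_level xs i | i. is_peak xs i}"
proof (induction h xs rule: pk.induct)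
  case (3 h xs)
  have "{h + peak_level (True#False#xs) i | i. is_peak (True#False#xs) i}
        = insert (h+1) {h + 1 + peak_level (False#xs) i | i. is_peak (False#xs) i}"
    by (subst set_split0) (simp add: ac_simps)
  then show ?case by (simp only: pk.simps 3)
next
  case (4 h xs)
  have "{h + peak_level (True#True#xs) i | i. is_peak (True#True#xs) i}
        = {h + 1 + peak_level (True#xs) i | i. is_peak (True#xs) i}"
    by (subst set_split0) (simp add: ac_simps)
  then show ?case by (simp only: pk.simps 4)
next
  case (5 h y xs)
  have "{h + peak_level (False#y#xs) i | i. is_peak (False#y#xs) i}
        = {h - 1 + peak_level (y#xs) i | i. is_peak (y#xs) i}"
    by (subst set_split0) (simp add: algebra_simps)
  then show ?case by (simp only: pk.simps 5)
qed simp_all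

lemma pk_False: "pk h (False # ys) = pk (h - 1) ys"
  by (cases ys) auto

lemma pk_append: "xs = [] \<or> last xs = False \<Longrightarrow> pk h (xs @ ys) = pk h xs \<union> pk (h + height xs) ys"
proof (induction h xs rule: pk.induct)
  case (2 h x)
  then show ?case by (simp add: pk_False)
next
  case (3 h xs)
  then show ?case by (simp add: algebra_simps)
next
  case (4 h xs)
  then show ?case by (simp add: algebra_simps)
next
  case (5 h y xs)
  then show ?case by (simp add: algebra_simps)
qed simp

lemma enc_last: "enc t = [] \<or> last (enc t) = False"
proof (cases t)
  case (Node ts)
  show ?thesis unfolding Node by (induction ts) (auto simp: enc_Cons)
qed

lemma height_enc: "height (enc t) = 0"
  using dyck_enc[of t] by (simp add: dyck_path_def)

lemma pk_enc: "\<forall>ts d. t = Node ts \<longrightarrow> pk (int d) (enc t) = int ` (\<Union>u\<in>set ts. leaf_depths (Suc d) u)"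
proof (induction t)
  case (Node ts0)
  show ?case
  proof (intro allI impI)
    fix ts d assume "Node ts0 = Node ts"
    then have [simp]: "ts0 = ts" by simp
    have IH: "\<And>u us d. u \<in> set ts \<Longrightarrow> u = Node us \<Longrightarrow> pk (int d) (enc u) = int ` (\<Union>v\<in>set us. leaf_depths (Suc d) v)"
      using Node.IH by auto
    from IH have "pk (int d) (enc (Node ts)) = int ` (\<Union>u\<in>set ts. leaf_depths (Suc d) u)"
    proof (induction ts arbitrary: d)
      case Nil then show ?case by simp
    next
      case (Cons a ts d)
      have IHts: "pk (int d) (enc (Node ts)) = int ` (\<Union>u\<in>set ts. leaf_depths (Suc d) u)"
        using Cons.IH Cons.prems by auto
      obtain us where a: "a = Node us" by (cases a)
      show ?case
      proof (cases "us = []")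
        case True
        have "pk (int d) (enc (Node (a#ts))) = pk (int d) (True # False # enc (Node ts))"
          using a True by (simp add: enc_Cons)
        also have "\<dots> = insert (int d + 1) (pk (int d) (enc (Node ts)))" by (simp add: pk_False)
        also have "\<dots> = int ` (\<Union>u\<in>set (a#ts). leaf_depths (Suc d) u)" using IHts a True by (simp add: ac_simps)
        finally show ?thesis .
      next
        case False
        then obtain b us' where us: "us = b # us'" by (cases us) auto
        obtain r where r: "enc a = True # r" using a us by (simp add: enc_Cons)
        have "pk (int d) (enc (Node (a#ts))) = pk (int d + 1) ((enc a @ [False]) @ enc (Node ts))"
          using r by (simp add: enc_Cons)
        also have "\<dots> = pk (int d + 1) (enc a @ [False]) \<union> pk (int d) (enc (Node ts))"
          using pk_append[of "enc a @ [False]" "int d + 1" "enc (Node ts)"] height_enc[of a] by simp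
        also have "pk (int d + 1) (enc a @ [False]) = pk (int d + 1) (enc a)"
          using pk_append[of "enc a" "int d + 1" "[False]"] enc_last[of a] by simp
        also have "pk (int d + 1) (enc a) = int ` leaf_depths (Suc d) a"
          using Cons.prems[of a us "Suc d"] a False by (simp add: ac_simps)
        finally show ?thesis using IHts by (simp add: image_Un)
      qed
    qed
    then show "pk (int d) (enc (Node ts0)) = int ` (\<Union>u\<in>set ts. leaf_depths (Suc d) u)" by simp
  qed
qed

lemma retakh_path_pk: "retakh_path xs \<longleftrightarrow> dyck_path xs \<and> (\<forall>l\<in>pk 0 xs. l = 1 \<or> even l)"
  unfolding retakh_path_def pk_peaks by auto

lemma retakh_enc: "retakh_path (enc t) \<longleftrightarrow> retakh_tree t"
proof (cases t)
  case (Node ts)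
  have pk0: "pk 0 (enc t) = int ` (\<Union>u\<in>set ts. leaf_depths (Suc 0) u)"
    using pk_enc[of t] Node by (metis of_nat_0)
  have "retakh_tree t \<longleftrightarrow> (\<forall>d\<in>(\<Union>u\<in>set ts. leaf_depths (Suc 0) u). d = 1 \<or> even d)"
  proof (cases "ts = []")
    case True then show ?thesis using Node by (simp add: retakh_tree_def)
  next
    case False then show ?thesis using Node by (auto simp: retakh_tree_def ld_shift)
  qed
  then show ?thesis using pk0 dyck_enc[of t] by (auto simp: retakh_path_pk)
qed


theorem mainTheorem1:
  shows "(\<forall>n. card (retakh_paths n) = motzkin n)
       \<and> (\<forall>n. card {t. nodes t = Suc n \<and> retakh_tree t} = motzkin n)
       \<and> motzkin_fps = 1 + fps_X * motzkin_fps + fps_X ^ 2 * motzkin_fps ^ 2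
       \<and> tree_gf retakh_tree = fps_X * motzkin_fps
       \<and> tree_gf odd_leaf_tree = fps_X * tree_gf even_leaf_tree / (1 - tree_gf even_leaf_tree)
       \<and> tree_gf even_leaf_tree = fps_X / (1 - tree_gf odd_leaf_tree)
       \<and> tree_gf odd_leaf_tree = fps_X ^ 2 * motzkin_fps"
proof -
  have F: "tree_gf retakh_tree = fps_X * motzkin_fps
       \<and> tree_gf odd_leaf_tree = fps_X * tree_gf even_leaf_tree / (1 - tree_gf even_leaf_tree)
       \<and> tree_gf even_leaf_tree = fps_X / (1 - tree_gf odd_leaf_tree)
       \<and> tree_gf odd_leaf_tree = fps_X ^ 2 * motzkin_fps" by (rule fps_main)
  have trees: "card {t. nodes t = Suc n \<and> retakh_tree t} = motzkin n" for n
  proof -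
    have "fps_nth (tree_gf retakh_tree) (Suc n) = fps_nth (fps_X * motzkin_fps) (Suc n)" using F by simp
    then show ?thesis by (simp add: tree_gf_def motzkin_fps_def)
  qed
  have set: "retakh_paths n = enc ` {t. nodes t = Suc n \<and> retakh_tree t}" for n
  proof
    show "retakh_paths n \<subseteq> enc ` {t. nodes t = Suc n \<and> retakh_tree t}"
    proof
      fix xs assume "xs \<in> retakh_paths n"
      then have xs: "length xs = 2*n" "retakh_path xs" by (auto simp: retakh_paths_def)
      then have "dyck_path xs" by (simp add: retakh_path_def)
      then obtain t where t: "enc t = xs" using dyck_surj by blast
      have "nodes t = Suc n" using length_enc[of t] t xs(1) by simp
      moreover have "retakh_tree t" using retakh_enc[of t] t xs(2) by simp
      ultimately show "xs \<in> enc ` {t. nodes t = Suc n \<and> retakh_tree t}" using t by blast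
    qed
  next
    show "enc ` {t. nodes t = Suc n \<and> retakh_tree t} \<subseteq> retakh_paths n"
    proof
      fix xs assume "xs \<in> enc ` {t. nodes t = Suc n \<and> retakh_tree t}"
      then obtain t where t: "xs = enc t" "nodes t = Suc n" "retakh_tree t" by blast
      have "length xs = 2*n" using length_enc[of t] t by simp
      moreover have "retakh_path xs" using retakh_enc[of t] t by simp
      ultimately show "xs \<in> retakh_paths n" by (simp add: retakh_paths_def)
    qed
  qed
  have paths: "card (retakh_paths n) = motzkin n" for n
  proof -
    have "inj_on enc {t. nodes t = Suc n \<and> retakh_tree t}" by (auto intro: inj_onI enc_inj)
    then show ?thesis unfolding set by (simp add: card_image trees)
  qed
  show ?thesis using F trees paths M_eq by blast
qed

end
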